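(* Let $n\ge 5$, $k_1=n-2$, $k_2=k_3=1$, and let $g$ be a left-invariant metric on $\mathrm{SO}(n)$ of form (III) with arbitrary parameters $x_1,x_{12},x_{13},x_{23}>0$. Then its Ricci tensor $r$ at the identity satisfies $r(X,Y)=0$ for all $X\in\mathfrak m_{12}$ and $Y\in\mathfrak m_{13}$.
   Context: Let $n=k_1+k_2+k_3$ with positive integers $k_i$, $\mathfrak{so}(n)$ the Lie algebra of $\mathrm{SO}(n)$, and $B(X,Y)=(n-2)\operatorname{tr}(XY)$ its Killing form. Write $n\times n$ matrices in block form with diagonal blocks of sizes $k_1,k_2,k_3$. Let $\mathfrak m_i=\mathfrak{so}(k_i)$ embedded as the $i$-th diagonal block ($\mathfrak m_i=0$ if $k_i=1$), and for $1\le i<j\le 3$ let $\mathfrak m_{ij}$ be the set of matrices whose only nonzero blocks are an arbitrary $(i,j)$-block $A\in M(k_i,k_j)$ and the $(j,i)$-block $-A^t$. A left-invariant metric of form (III) (used when $k_1=n-2$, $k_2=k_3=1$, so $\mathfrak m_2=\mathfrak m_3=0$) is the one whose value at the identity is $x_1(-B)|_{\mathfrak m_1}+x_{12}(-B)|_{\mathfrak m_{12}}+x_{13}(-B)|_{\mathfrak m_{13}}+x_{23}(-B)|_{\mathfrak m_{23}}$ with the summands mutually orthogonal and all $x$'s positive. (Here $\mathfrak m_{12}$ and $\mathfrak m_{13}$ are equivalent $\mathrm{Ad}(\mathrm{SO}(n-2))$-modules.) The Ricci tensor is that of the Levi-Civita connection, as a bilinear form on $\mathfrak{so}(n)=T_e\mathrm{SO}(n)$.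 *)

theory Defs
  imports Complex_Main
begin

text \<open>Real n x n matrices are represented as functions nat => nat => real; only
entries with both indices < n are meaningful, and elements of so(n) are
required to vanish outside that range (canonical representatives).\<close>

type_synonym mat = "nat \<Rightarrow> nat \<Rightarrow> real"

definition so :: "nat \<Rightarrow> mat set" where
  "so n = {X. (\<forall>i j. X i j = - X j i) \<and> (\<forall>i j. (n \<le> i \<or> n \<le> j) \<longrightarrow> X i j = 0)}"

definition mmul :: "nat \<Rightarrow> mat \<Rightarrow> mat \<Rightarrow> mat" where
  "mmul n X Y = (\<lambda>i j. if i < n \<and> j < n then (\<Sum>k<n. X i k * Y k j) else 0)"

definition bracket :: "nat \<Rightarrow> mat \<Rightarrow> mat \<Rightarrow> mat" where
  "bracket n X Y = (\<lambda>i j. mmul n X Y i j - mmul n Y X i j)"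

definition mtrace :: "nat \<Rightarrow> mat \<Rightarrow> real" where
  "mtrace n X = (\<Sum>i<n. X i i)"

definition killing :: "nat \<Rightarrow> mat \<Rightarrow> mat \<Rightarrow> real" where
  "killing n X Y = (real n - 2) * mtrace n (mmul n X Y)"

definition blk :: "nat \<Rightarrow> nat \<Rightarrow> nat \<Rightarrow> nat" where
  "blk k1 k2 a = (if a < k1 then 1 else if a < k1 + k2 then 2 else 3)"

definition proj_diag :: "nat \<Rightarrow> nat \<Rightarrow> nat \<Rightarrow> mat \<Rightarrow> mat" where
  "proj_diag k1 k2 i X = (\<lambda>a b. if blk k1 k2 a = i \<and> blk k1 k2 b = i then X a b else 0)"

definition proj_off :: "nat \<Rightarrow> nat \<Rightarrow> nat \<Rightarrow> nat \<Rightarrow> mat \<Rightarrow> mat" where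
  "proj_off k1 k2 i j X = (\<lambda>a b. if (blk k1 k2 a = i \<and> blk k1 k2 b = j) \<or>
                                     (blk k1 k2 a = j \<and> blk k1 k2 b = i) then X a b else 0)"

text \<open>m_ij: elements of so(n) whose only nonzero blocks are the (i,j) block A and the (j,i) block -A^t.\<close>
definition m_off :: "nat \<Rightarrow> nat \<Rightarrow> nat \<Rightarrow> nat \<Rightarrow> nat \<Rightarrow> mat set" where
  "m_off n k1 k2 i j = {X \<in> so n. proj_off k1 k2 i j X = X}"

definition metricIII :: "nat \<Rightarrow> real \<Rightarrow> real \<Rightarrow> real \<Rightarrow> real \<Rightarrow> mat \<Rightarrow> mat \<Rightarrow> real" where
  "metricIII n x1 x12 x13 x23 X Y =
     (let k1 = n - 2; k2 = 1 in
        x1 * - killing n (proj_diag k1 k2 1 X) (proj_diag k1 k2 1 Y)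
      + x12 * - killing n (proj_off k1 k2 1 2 X) (proj_off k1 k2 1 2 Y)
      + x13 * - killing n (proj_off k1 k2 1 3 X) (proj_off k1 k2 1 3 Y)
      + x23 * - killing n (proj_off k1 k2 2 3 X) (proj_off k1 k2 2 3 Y))"

text \<open>Levi-Civita connection of a left-invariant metric g (inner product on so(n)) on
left-invariant vector fields, determined by the Koszul formula
  2 g(nabla_X Y, Z) = g([X,Y],Z) - g([Y,Z],X) + g([Z,X],Y).\<close>
definition levi_civita :: "nat \<Rightarrow> (mat \<Rightarrow> mat \<Rightarrow> real) \<Rightarrow> mat \<Rightarrow> mat \<Rightarrow> mat" where
  "levi_civita n g X Y = (THE W. W \<in> so n \<and> (\<forall>Z \<in> so n.
      2 * g W Z = g (bracket n X Y) Z - g (bracket n Y Z) X + g (bracket n Z X) Y))"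

definition curv :: "nat \<Rightarrow> (mat \<Rightarrow> mat \<Rightarrow> real) \<Rightarrow> mat \<Rightarrow> mat \<Rightarrow> mat \<Rightarrow> mat" where
  "curv n g X Y Z = (\<lambda>a b.
      levi_civita n g X (levi_civita n g Y Z) a b
    - levi_civita n g Y (levi_civita n g X Z) a b
    - levi_civita n g (bracket n X Y) Z a b)"

text \<open>Elementary basis E_ab = e_a e_b^t - e_b e_a^t (a<b) of so(n); the coefficient of
E_ab in a skew matrix M is M a b, so the trace of a linear map L on so(n) is
sum_{a<b<n} (L E_ab) a b.\<close>
definition Ebasis :: "nat \<Rightarrow> nat \<Rightarrow> mat" where
  "Ebasis a b = (\<lambda>i j. (if i = a \<and> j = b then 1 else 0) - (if i = b \<and> j = a then 1 else 0))"

definition so_trace :: "nat \<Rightarrow> (mat \<Rightarrow> mat) \<Rightarrow> real" where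
  "so_trace n L = (\<Sum>b<n. \<Sum>a<b. L (Ebasis a b) a b)"

definition ricci :: "nat \<Rightarrow> (mat \<Rightarrow> mat \<Rightarrow> real) \<Rightarrow> mat \<Rightarrow> mat \<Rightarrow> real" where
  "ricci n g X Y = so_trace n (\<lambda>Z. curv n g Z X Y)"

end

theory Submission imports Defs begin

definition G :: "nat \<Rightarrow> (nat\<Rightarrow>nat\<Rightarrow>real) \<Rightarrow> mat \<Rightarrow> mat \<Rightarrow> real" where
 "G n c X Y = - (\<Sum>a<n. \<Sum>k<n. c a k * X a k * Y k a)"
definition sc :: "real \<Rightarrow> mat \<Rightarrow> mat" where "sc t A = (\<lambda>i j. t * A i j)"
definition ad :: "mat \<Rightarrow> mat \<Rightarrow> mat" where "ad A B = (\<lambda>i j. A i j + B i j)"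
definition linf :: "(mat \<Rightarrow> real) \<Rightarrow> bool" where
 "linf F \<longleftrightarrow> (\<forall>A B. F (ad A B) = F A + F B) \<and> (\<forall>t A. F (sc t A) = t * F A)"

lemma linf_sum: assumes "linf F" "finite S" shows "F (\<lambda>i j. \<Sum>p\<in>S. M p i j) = (\<Sum>p\<in>S. F (M p))"
  using assms(2)
proof (induction S rule: finite_induct)
  case empty
  have "F (\<lambda>i j. 0) = F (sc 0 (\<lambda>i j. 0))" by (simp add: sc_def)
  also have "\<dots> = 0" using assms(1) by (simp add: linf_def)
  finally show ?case by simp
next
  case (insert x S)
  have "(\<lambda>i j. \<Sum>p\<in>insert x S. M p i j) = ad (M x) (\<lambda>i j. \<Sum>p\<in>S. M p i j)"
    using insert by (simp add: ad_def)
  then show ?case using insert assms(1) by (simp add: linf_def)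
qed

lemma linf_sum2: fixes n :: nat assumes "linf F"
  shows "F (\<lambda>i j. \<Sum>b<n. \<Sum>a<b. u a b * M a b i j) = (\<Sum>b<n. \<Sum>a<b. u a b * F (M a b))"
proof -
  have "F (\<lambda>i j. \<Sum>b<n. \<Sum>a<b. u a b * M a b i j) = (\<Sum>b<n. F (\<lambda>i j. \<Sum>a<b. u a b * M a b i j))"
    by (rule linf_sum[OF assms, of "{..<n}" "\<lambda>b i j. \<Sum>a<b. u a b * M a b i j"]) auto
  also have "\<dots> = (\<Sum>b<n. \<Sum>a<b. F (sc (u a b) (M a b)))"
  proof (rule sum.cong[OF refl])
    fix b show "F (\<lambda>i j. \<Sum>a<b. u a b * M a b i j) = (\<Sum>a<b. F (sc (u a b) (M a b)))"
      using linf_sum[OF assms, of "{..<b}" "\<lambda>a. sc (u a b) (M a b)"] by (simp add: sc_def)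
  qed
  also have "\<dots> = (\<Sum>b<n. \<Sum>a<b. u a b * F (M a b))"
    using assms by (simp add: linf_def)
  finally show ?thesis .
qed

lemma linf_G1: "linf (\<lambda>A. G n c A Y)"
  unfolding linf_def G_def ad_def sc_def
  by (simp add: algebra_simps sum.distrib sum_distrib_left)
lemma linf_G2: "linf (\<lambda>A. G n c Y A)"
  unfolding linf_def G_def ad_def sc_def
  by (simp add: algebra_simps sum.distrib sum_distrib_left)

lemma mmul_ad1: "mmul n (ad A B) C = ad (mmul n A C) (mmul n B C)"
  by (auto simp: mmul_def ad_def fun_eq_iff algebra_simps sum.distrib)
lemma mmul_ad2: "mmul n C (ad A B) = ad (mmul n C A) (mmul n C B)"
  by (auto simp: mmul_def ad_def fun_eq_iff algebra_simps sum.distrib)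
lemma mmul_sc1: "mmul n (sc t A) C = sc t (mmul n A C)"
  by (auto simp: mmul_def sc_def fun_eq_iff algebra_simps sum_distrib_left)
lemma mmul_sc2: "mmul n C (sc t A) = sc t (mmul n C A)"
  by (auto simp: mmul_def sc_def fun_eq_iff algebra_simps sum_distrib_left)
lemma br_ad1: "bracket n (ad A B) C = ad (bracket n A C) (bracket n B C)"
  by (simp add: bracket_def mmul_ad1 mmul_ad2) (simp add: ad_def fun_eq_iff)
lemma br_ad2: "bracket n C (ad A B) = ad (bracket n C A) (bracket n C B)"
  by (simp add: bracket_def mmul_ad1 mmul_ad2) (simp add: ad_def fun_eq_iff)
lemma br_sc1: "bracket n (sc t A) C = sc t (bracket n A C)"
  by (simp add: bracket_def mmul_sc1 mmul_sc2) (simp add: sc_def fun_eq_iff algebra_simps)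
lemma br_sc2: "bracket n C (sc t A) = sc t (bracket n C A)"
  by (simp add: bracket_def mmul_sc1 mmul_sc2) (simp add: sc_def fun_eq_iff algebra_simps)

lemma linf_K: "linf (\<lambda>Z. G n c (bracket n X Y) Z - G n c (bracket n Y Z) X + G n c (bracket n Z X) Y)"
  using linf_G1[of n c] linf_G2[of n c]
  unfolding linf_def by (simp add: br_ad1 br_ad2 br_sc1 br_sc2 algebra_simps)

lemma so_sk: "X \<in> so n \<Longrightarrow> X i j = - X j i" unfolding so_def by blast
lemma so_dg: "X \<in> so n \<Longrightarrow> X i i = 0" using so_sk[of X n i i] by simp
lemma so_out: "X \<in> so n \<Longrightarrow> n \<le> i \<or> n \<le> j \<Longrightarrow> X i j = 0" unfolding so_def by blast
lemma so_I: "(\<And>i j. X i j = - X j i) \<Longrightarrow> (\<And>i j. n \<le> i \<or> n \<le> j \<Longrightarrow> X i j = 0) \<Longrightarrow> X \<in> so n"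
  unfolding so_def by blast

lemma inner_delta: fixes b :: nat shows "(\<Sum>a<b. (if i = a \<and> j = b then f a else (0::real))) = (if j = b \<and> i < b then f i else 0)"
proof (cases "j = b")
  case True
  then have "(\<Sum>a<b. (if i = a \<and> j = b then f a else (0::real))) = (\<Sum>a<b. if i = a then f a else 0)" by simp
  also have "\<dots> = (if i < b then f i else 0)" by (simp add: sum.delta sum.delta')
  finally show ?thesis using True by simp
qed simp

lemma decomp: assumes "Z \<in> so n" shows "(\<lambda>i j. \<Sum>b<n. \<Sum>a<b. Z a b * Ebasis a b i j) = Z"
proof (intro ext)
  fix i j
  have sk: "\<And>i j. Z i j = - Z j i" and out: "\<And>i j. n \<le> i \<or> n \<le> j \<Longrightarrow> Z i j = 0" using so_sk[OF assms] so_out[OF assms] by blast+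
  have e1: "(\<Sum>b<n. \<Sum>a<b. Z a b * (if i = a \<and> j = b then 1 else 0)) = (if i < j \<and> j < n then Z i j else 0)"
  proof -
    have "(\<Sum>b<n. \<Sum>a<b. Z a b * (if i = a \<and> j = b then 1 else 0)) = (\<Sum>b<n. if b = j then (if i < b then Z i b else 0) else 0)"
    proof (rule sum.cong[OF refl])
      fix b
      have "(\<Sum>a<b. Z a b * (if i = a \<and> j = b then 1 else 0)) = (\<Sum>a<b. if i = a \<and> j = b then Z a b else 0)"
        by (rule sum.cong) auto
      also have "\<dots> = (if j = b \<and> i < b then Z i b else 0)" by (rule inner_delta)
      finally show "(\<Sum>a<b. Z a b * (if i = a \<and> j = b then 1 else 0)) = (if b = j then (if i < b then Z i b else 0) else 0)" by auto
    qed
    thus ?thesis by simp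
  qed
  have e2: "(\<Sum>b<n. \<Sum>a<b. Z a b * (if i = b \<and> j = a then 1 else 0)) = (if j < i \<and> i < n then Z j i else 0)"
  proof -
    have "(\<Sum>b<n. \<Sum>a<b. Z a b * (if i = b \<and> j = a then 1 else 0)) = (\<Sum>b<n. if b = i then (if j < b then Z j b else 0) else 0)"
    proof (rule sum.cong[OF refl])
      fix b
      have "(\<Sum>a<b. Z a b * (if i = b \<and> j = a then 1 else 0)) = (\<Sum>a<b. if j = a \<and> i = b then Z a b else 0)"
        by (rule sum.cong) auto
      also have "\<dots> = (if i = b \<and> j < b then Z j b else 0)" by (rule inner_delta)
      finally show "(\<Sum>a<b. Z a b * (if i = b \<and> j = a then 1 else 0)) = (if b = i then (if j < b then Z j b else 0) else 0)" by auto
    qed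
    thus ?thesis by simp
  qed
  have "(\<Sum>b<n. \<Sum>a<b. Z a b * Ebasis a b i j) = (\<Sum>b<n. \<Sum>a<b. Z a b * (if i = a \<and> j = b then 1 else 0)) - (\<Sum>b<n. \<Sum>a<b. Z a b * (if i = b \<and> j = a then 1 else 0))"
    by (simp add: Ebasis_def algebra_simps sum_subtractf)
  also have "\<dots> = Z i j" unfolding e1 e2
    using sk[of i j] sk[of i i] out[of i j] by auto
  finally show "(\<Sum>b<n. \<Sum>a<b. Z a b * Ebasis a b i j) = Z i j" .
qed

lemma sum_sq: fixes n :: nat and h :: "nat \<Rightarrow> nat \<Rightarrow> real" shows "(\<Sum>a<n. \<Sum>k<n. h a k) = (\<Sum>b<n. \<Sum>a<b. h a b + h b a) + (\<Sum>a<n. h a a)"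
proof (induction n)
  case 0 then show ?case by simp
next
  case (Suc n)
  have "(\<Sum>a<Suc n. \<Sum>k<Suc n. h a k) = (\<Sum>a<n. \<Sum>k<n. h a k) + (\<Sum>a<n. h a n) + (\<Sum>k<n. h n k) + h n n"
    by (simp add: sum.distrib)
  moreover have "(\<Sum>b<Suc n. \<Sum>a<b. h a b + h b a) + (\<Sum>a<Suc n. h a a) = ((\<Sum>b<n. \<Sum>a<b. h a b + h b a) + (\<Sum>a<n. h a a)) + ((\<Sum>a<n. h a n) + (\<Sum>a<n. h n a)) + h n n"
    by (simp add: sum.distrib)
  ultimately show ?case using Suc.IH by linarith
qed


lemma G_skew: assumes "Z \<in> so n" shows "G n c W Z = (\<Sum>a<n. \<Sum>k<n. c a k * W a k * Z a k)"
proof -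
  have eq: "\<And>a k. c a k * W a k * Z k a = - (c a k * W a k * Z a k)"
  proof -
    fix a k have "Z k a = - Z a k" by (rule so_sk[OF assms])
    then show "c a k * W a k * Z k a = - (c a k * W a k * Z a k)" by simp
  qed
  have "(\<Sum>a<n. \<Sum>k<n. c a k * W a k * Z k a) = (\<Sum>a<n. \<Sum>k<n. - (c a k * W a k * Z a k))"
    by (intro sum.cong refl) (rule eq)
  then show ?thesis unfolding G_def by (simp add: sum_negf)
qed

locale LC =
  fixes n :: nat and c :: "nat \<Rightarrow> nat \<Rightarrow> real"
  assumes cpos: "\<And>a b. a < n \<Longrightarrow> b < n \<Longrightarrow> a \<noteq> b \<Longrightarrow> c a b > 0"
    and csym: "\<And>a b. c a b = c b a"
begin

lemma exists_rep:
  assumes lin: "linf F"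
  shows "\<exists>W\<in>so n. \<forall>Z\<in>so n. 2 * G n c W Z = F Z"
proof -
  define W where "W = (\<lambda>a b. if a < b \<and> b < n then F (Ebasis a b) / (4 * c a b)
     else if b < a \<and> a < n then - (F (Ebasis b a) / (4 * c b a)) else 0)"
  have Wso: "W \<in> so n" by (rule so_I) (auto simp: W_def)
  have "\<forall>Z\<in>so n. 2 * G n c W Z = F Z"
  proof
    fix Z assume Z: "Z \<in> so n"
    have o: "\<And>a b. c a b * W a b * Z a b + c b a * W b a * Z b a = 2 * (c a b * W a b * Z a b)"
    proof -
      fix a b
      have "Z b a = - Z a b" "W b a = - W a b" "c b a = c a b" using so_sk[OF Z] so_sk[OF Wso] csym by blast+
      then show "c a b * W a b * Z a b + c b a * W b a * Z b a = 2 * (c a b * W a b * Z a b)" by simp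
    qed
    have d: "\<And>a. c a a * W a a * Z a a = 0" using so_dg[OF Z] by simp
    have "G n c W Z = (\<Sum>b<n. \<Sum>a<b. c a b * W a b * Z a b + c b a * W b a * Z b a) + (\<Sum>a<n. c a a * W a a * Z a a)"
      using G_skew[OF Z] sum_sq by simp
    also have "\<dots> = (\<Sum>b<n. \<Sum>a<b. 2 * (c a b * W a b * Z a b))"
      by (simp only: o d sum.neutral_const add_0_right)
    finally have "2 * G n c W Z = (\<Sum>b<n. \<Sum>a<b. 4 * (c a b * W a b * Z a b))"
      by (simp add: sum_distrib_left)
    also have "\<dots> = (\<Sum>b<n. \<Sum>a<b. Z a b * F (Ebasis a b))"
    proof (intro sum.cong refl)
      fix b a assume "b \<in> {..<n}" "a \<in> {..<b}"
      then have "c a b > 0" using cpos by auto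
      then show "4 * (c a b * W a b * Z a b) = Z a b * F (Ebasis a b)"
        using \<open>b \<in> {..<n}\<close> \<open>a \<in> {..<b}\<close> by (simp add: W_def)
    qed
    also have "\<dots> = F Z"
      using linf_sum2[OF lin, where n=n and u=Z and M=Ebasis] decomp[OF Z] by simp
    finally show "2 * G n c W Z = F Z" .
  qed
  with Wso show ?thesis by blast
qed

lemma G_diff: "G n c (\<lambda>i j. A i j - B i j) Z = G n c A Z - G n c B Z"
  unfolding G_def by (simp add: algebra_simps sum_subtractf)

lemma unique_rep:
  assumes "W1 \<in> so n" "W2 \<in> so n" "\<forall>Z\<in>so n. G n c W1 Z = G n c W2 Z"
  shows "W1 = W2"
proof -
  define V where "V = (\<lambda>i j. W1 i j - W2 i j)"
  have Vso: "V \<in> so n"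
  proof (rule so_I)
    fix i j
    show "V i j = - V j i" using so_sk[OF assms(1), of i j] so_sk[OF assms(2), of i j] by (simp add: V_def)
    show "n \<le> i \<or> n \<le> j \<Longrightarrow> V i j = 0" using so_out[OF assms(1)] so_out[OF assms(2)] by (simp add: V_def)
  qed
  have "G n c V V = 0" using assms(3) Vso unfolding V_def G_diff by simp
  hence "(\<Sum>a<n. \<Sum>k<n. c a k * V a k * V a k) = 0" using G_skew[OF Vso] by simp
  moreover have nn: "\<And>a k. a < n \<Longrightarrow> k < n \<Longrightarrow> c a k * V a k * V a k \<ge> 0"
  proof -
    fix a k assume "a < n" "k < n"
    show "c a k * V a k * V a k \<ge> 0"
    proof (cases "a = k")
      case True then have "V a k = 0" using so_dg[OF Vso] by simp
      then show ?thesis by simp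
    next
      case False then have "c a k > 0" using cpos \<open>a<n\<close> \<open>k<n\<close> by auto
      then show ?thesis by (simp add: mult.assoc)
    qed
  qed
  ultimately have "\<forall>a\<in>{..<n}. (\<Sum>k<n. c a k * V a k * V a k) = 0"
    by (subst sum_nonneg_eq_0_iff[symmetric]) (auto intro!: sum_nonneg)
  note S0 = this
  have z: "\<And>a k. a < n \<Longrightarrow> k < n \<Longrightarrow> c a k * V a k * V a k = 0"
  proof -
    fix a k assume a: "a < n" and k: "k < n"
    have "(\<Sum>k'<n. c a k' * V a k' * V a k') = 0" using S0 a by blast
    moreover have "\<forall>k'\<in>{..<n}. 0 \<le> c a k' * V a k' * V a k'" using nn a by blast
    ultimately have "\<forall>k'\<in>{..<n}. c a k' * V a k' * V a k' = 0"
      using sum_nonneg_eq_0_iff[of "{..<n}" "\<lambda>k'. c a k' * V a k' * V a k'"] by simp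
    then show "c a k * V a k * V a k = 0" using k by blast
  qed
  have "\<And>a k. V a k = 0"
  proof -
    fix a k
    show "V a k = 0"
    proof (cases "a < n \<and> k < n")
      case True
      show ?thesis
      proof (cases "a = k")
        case True then show ?thesis using so_dg[OF Vso] by simp
      next
        case False then have "c a k > 0" using cpos \<open>a<n \<and> k<n\<close> by auto
        then show ?thesis using z[of a k] \<open>a<n \<and> k<n\<close> by simp
      qed
    next
      case False then show ?thesis using so_out[OF Vso] by auto
    qed
  qed
  then show ?thesis unfolding V_def by (auto simp: fun_eq_iff)
qed

definition K where "K X Y Z = G n c (bracket n X Y) Z - G n c (bracket n Y Z) X + G n c (bracket n Z X) Y"
abbreviation nab where "nab X Y \<equiv> levi_civita n (G n c) X Y"

lemma ex1: "\<exists>!W. W \<in> so n \<and> (\<forall>Z\<in>so n. 2 * G n c W Z = K X Y Z)"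
proof -
  obtain W where W: "W \<in> so n" "\<forall>Z\<in>so n. 2 * G n c W Z = K X Y Z"
    using exists_rep[OF linf_K[of n c X Y]] unfolding K_def by blast
  show ?thesis
  proof (rule ex1I[of _ W])
    show "W \<in> so n \<and> (\<forall>Z\<in>so n. 2 * G n c W Z = K X Y Z)" using W by blast
    fix W' assume W': "W' \<in> so n \<and> (\<forall>Z\<in>so n. 2 * G n c W' Z = K X Y Z)"
    have "\<forall>Z\<in>so n. G n c W' Z = G n c W Z"
    proof
      fix Z assume "Z \<in> so n"
      then have "2 * G n c W' Z = K X Y Z" "2 * G n c W Z = K X Y Z" using W' W(2) by auto
      then show "G n c W' Z = G n c W Z" by simp
    qed
    then show "W' = W" using unique_rep[of W' W] W W' by blast
  qed
qed

lemma nab_spec: "nab X Y \<in> so n \<and> (\<forall>Z\<in>so n. 2 * G n c (nab X Y) Z = K X Y Z)"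
  unfolding levi_civita_def K_def[symmetric] by (rule theI'[OF ex1])

lemma nab_eq: assumes "W \<in> so n" "\<forall>Z\<in>so n. 2 * G n c W Z = K X Y Z" shows "nab X Y = W"
  unfolding levi_civita_def K_def[symmetric]
  by (rule the1_equality[OF ex1]) (use assms in blast)

lemma sc_so: assumes A: "A \<in> so n" shows "sc t A \<in> so n"
proof (rule so_I)
  fix i j
  show "sc t A i j = - sc t A j i" using so_sk[OF A, of i j] by (simp add: sc_def)
  show "n \<le> i \<or> n \<le> j \<Longrightarrow> sc t A i j = 0" using so_out[OF A] by (simp add: sc_def)
qed

lemma G_sc1: "G n c (sc t A) B = t * G n c A B" using linf_G1[of n c] by (simp add: linf_def)
lemma G_sc2: "G n c B (sc t A) = t * G n c B A" using linf_G2[of n c] by (simp add: linf_def)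

lemma K_sc1: "K (sc t A) B Z = t * K A B Z"
  by (simp add: K_def br_sc1 br_sc2 G_sc1 G_sc2 algebra_simps)
lemma K_sc2: "K A (sc t B) Z = t * K A B Z"
  by (simp add: K_def br_sc1 br_sc2 G_sc1 G_sc2 algebra_simps)

lemma nab_sc1: "nab (sc t A) B = sc t (nab A B)"
proof (rule nab_eq)
  show "sc t (nab A B) \<in> so n" using nab_spec[of A B] sc_so by blast
  show "\<forall>Z\<in>so n. 2 * G n c (sc t (nab A B)) Z = K (sc t A) B Z"
  proof
    fix Z assume "Z \<in> so n"
    then have eq: "2 * G n c (nab A B) Z = K A B Z" using nab_spec[of A B] by blast
    have "2 * G n c (sc t (nab A B)) Z = t * (2 * G n c (nab A B) Z)" by (simp add: G_sc1)
    also have "\<dots> = t * K A B Z" using eq by simp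
    also have "\<dots> = K (sc t A) B Z" by (simp add: K_sc1)
    finally show "2 * G n c (sc t (nab A B)) Z = K (sc t A) B Z" .
  qed
qed

lemma nab_sc2: "nab A (sc t B) = sc t (nab A B)"
proof (rule nab_eq)
  show "sc t (nab A B) \<in> so n" using nab_spec[of A B] sc_so by blast
  show "\<forall>Z\<in>so n. 2 * G n c (sc t (nab A B)) Z = K A (sc t B) Z"
  proof
    fix Z assume "Z \<in> so n"
    then have eq: "2 * G n c (nab A B) Z = K A B Z" using nab_spec[of A B] by blast
    have "2 * G n c (sc t (nab A B)) Z = t * (2 * G n c (nab A B) Z)" by (simp add: G_sc1)
    also have "\<dots> = t * K A B Z" using eq by simp
    also have "\<dots> = K A (sc t B) Z" by (simp add: K_sc2)
    finally show "2 * G n c (sc t (nab A B)) Z = K A (sc t B) Z" .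
  qed
qed

lemma curv_sc1: "curv n (G n c) (sc t E) X Y = sc t (curv n (G n c) E X Y)"
  by (simp add: curv_def nab_sc1 nab_sc2 br_sc1) (simp add: sc_def algebra_simps)

lemma curv_sc2: "curv n (G n c) E (sc t X) Y = sc t (curv n (G n c) E X Y)"
  by (simp add: curv_def nab_sc1 nab_sc2 br_sc2) (simp add: sc_def algebra_simps)

lemma ricci_sc: "ricci n (G n c) (sc t X) Y = t * ricci n (G n c) X Y"
  by (simp add: ricci_def so_trace_def curv_sc2 sum_distrib_left) (simp add: sc_def)

end

definition sg :: "nat \<Rightarrow> nat \<Rightarrow> real" where "sg m i = (if i = m then -1 else 1)"
definition phi :: "nat \<Rightarrow> mat \<Rightarrow> mat" where "phi m A = (\<lambda>i j. sg m i * sg m j * A i j)"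

lemma sg_sq[simp]: "sg m i * sg m i = 1" by (simp add: sg_def)
lemma sg_sq'[simp]: "sg m i * (sg m i * x) = x" by (simp add: sg_def)

lemma phi_phi[simp]: "phi m (phi m A) = A"
  by (simp add: phi_def fun_eq_iff sg_def)
lemma phi_so: assumes A: "A \<in> so n" shows "phi m A \<in> so n"
proof (rule so_I)
  fix i j
  show "phi m A i j = - phi m A j i" using so_sk[OF A, of i j] by (simp add: phi_def)
  show "n \<le> i \<or> n \<le> j \<Longrightarrow> phi m A i j = 0" using so_out[OF A] by (simp add: phi_def)
qed
lemma mmul_phi: "mmul n (phi m A) (phi m B) = phi m (mmul n A B)"
proof -
  have "\<And>i j. (\<Sum>k<n. sg m i * sg m k * A i k * (sg m k * sg m j * B k j)) = sg m i * sg m j * (\<Sum>k<n. A i k * B k j)"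
    by (simp add: sum_distrib_left) (rule sum.cong, auto simp: sg_def)
  then show ?thesis by (simp add: mmul_def phi_def fun_eq_iff)
qed
lemma br_phi: "bracket n (phi m A) (phi m B) = phi m (bracket n A B)"
  by (simp add: bracket_def mmul_phi) (simp add: phi_def fun_eq_iff algebra_simps)
lemma G_phi: "G n c (phi m A) (phi m B) = G n c A B"
  unfolding G_def phi_def by (rule arg_cong[where f=uminus], intro sum.cong refl) (auto simp: sg_def)
lemma G_phi': "G n c (phi m A) B = G n c A (phi m B)"
  using G_phi[of n c m A "phi m B"] by simp

context LC begin

lemma K_phi: "K (phi m X) (phi m Y) (phi m Z) = K X Y Z"
  by (simp add: K_def br_phi G_phi)

lemma nab_phi: "nab (phi m X) (phi m Y) = phi m (nab X Y)"
proof (rule nab_eq)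
  show "phi m (nab X Y) \<in> so n" using nab_spec[of X Y] phi_so by blast
  show "\<forall>Z\<in>so n. 2 * G n c (phi m (nab X Y)) Z = K (phi m X) (phi m Y) Z"
  proof
    fix Z assume Z: "Z \<in> so n"
    have "2 * G n c (phi m (nab X Y)) Z = 2 * G n c (nab X Y) (phi m Z)" by (simp add: G_phi')
    also have "\<dots> = K X Y (phi m Z)" using nab_spec[of X Y] phi_so[OF Z] by blast
    also have "\<dots> = K (phi m X) (phi m Y) Z" using K_phi[of m X Y "phi m Z"] by simp
    finally show "2 * G n c (phi m (nab X Y)) Z = K (phi m X) (phi m Y) Z" .
  qed
qed

lemma curv_phi: "curv n (G n c) (phi m E) (phi m X) (phi m Y) = phi m (curv n (G n c) E X Y)"
  by (simp add: curv_def nab_phi br_phi) (simp add: phi_def algebra_simps)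

lemma phi_E: "phi m (Ebasis a b) = sc (sg m a * sg m b) (Ebasis a b)"
  by (auto simp: phi_def sc_def Ebasis_def fun_eq_iff)

lemma ricci_phi: "ricci n (G n c) (phi m X) (phi m Y) = ricci n (G n c) X Y"
proof -
  have "\<And>a b. curv n (G n c) (Ebasis a b) (phi m X) (phi m Y) a b = curv n (G n c) (Ebasis a b) X Y a b"
  proof -
    fix a b
    have "curv n (G n c) (Ebasis a b) (phi m X) (phi m Y) = curv n (G n c) (phi m (phi m (Ebasis a b))) (phi m X) (phi m Y)" by simp
    also have "\<dots> = phi m (curv n (G n c) (phi m (Ebasis a b)) X Y)" by (rule curv_phi)
    also have "\<dots> = phi m (sc (sg m a * sg m b) (curv n (G n c) (Ebasis a b) X Y))" by (simp add: phi_E curv_sc1)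
    finally show "curv n (G n c) (Ebasis a b) (phi m X) (phi m Y) a b = curv n (G n c) (Ebasis a b) X Y a b"
      by (simp add: phi_def sc_def sg_def)
  qed
  then show ?thesis by (simp add: ricci_def so_trace_def)
qed

end

definition wt :: "nat \<Rightarrow> real \<Rightarrow> real \<Rightarrow> real \<Rightarrow> real \<Rightarrow> nat \<Rightarrow> nat \<Rightarrow> real" where
 "wt n x1 x12 x13 x23 a k =
   (real n - 2) * ((if blk (n-2) 1 a = 1 \<and> blk (n-2) 1 k = 1 then x1 else 0)
   + (if (blk (n-2) 1 a = 1 \<and> blk (n-2) 1 k = 2) \<or> (blk (n-2) 1 a = 2 \<and> blk (n-2) 1 k = 1) then x12 else 0)
   + (if (blk (n-2) 1 a = 1 \<and> blk (n-2) 1 k = 3) \<or> (blk (n-2) 1 a = 3 \<and> blk (n-2) 1 k = 1) then x13 else 0)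
   + (if (blk (n-2) 1 a = 2 \<and> blk (n-2) 1 k = 3) \<or> (blk (n-2) 1 a = 3 \<and> blk (n-2) 1 k = 2) then x23 else 0))"

lemma tr_mmul: "mtrace n (mmul n P Q) = (\<Sum>a<n. \<Sum>k<n. P a k * Q k a)"
  by (simp add: mtrace_def mmul_def)

lemma tr_proj: assumes "\<And>a b. C a b = C b a"
  shows "mtrace n (mmul n (\<lambda>a b. if C a b then X a b else 0) (\<lambda>a b. if C a b then Y a b else 0))
     = (\<Sum>a<n. \<Sum>k<n. if C a k then X a k * Y k a else 0)"
  unfolding tr_mmul
proof (intro sum.cong refl)
  fix a k
  have "C k a = C a k" by (rule assms)
  then show "(if C a k then X a k else 0) * (if C k a then Y k a else 0) = (if C a k then X a k * Y k a else 0)"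
    by simp
qed

lemma comb:
  fixes r x1 x12 x13 x23 :: real
  shows "x1 * - (r * (\<Sum>a<n. \<Sum>k<n. if C1 a k then X a k * Y k a else 0))
       + x12 * - (r * (\<Sum>a<n. \<Sum>k<n. if C2 a k then X a k * Y k a else 0))
       + x13 * - (r * (\<Sum>a<n. \<Sum>k<n. if C3 a k then X a k * Y k a else 0))
       + x23 * - (r * (\<Sum>a<n. \<Sum>k<n. if C4 a k then X a k * Y k a else 0))
     = - (\<Sum>a<n. \<Sum>k<n. r * ((if C1 a k then x1 else 0) + (if C2 a k then x12 else 0)
            + (if C3 a k then x13 else 0) + (if C4 a k then x23 else 0)) * X a k * Y k a)"
proof -
  have "\<And>a k. r * ((if C1 a k then x1 else 0) + (if C2 a k then x12 else 0)
            + (if C3 a k then x13 else 0) + (if C4 a k then x23 else 0)) * X a k * Y k a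
        = x1 * (r * (if C1 a k then X a k * Y k a else 0)) + x12 * (r * (if C2 a k then X a k * Y k a else 0))
          + x13 * (r * (if C3 a k then X a k * Y k a else 0)) + x23 * (r * (if C4 a k then X a k * Y k a else 0))"
    by (simp add: algebra_simps)
  then have "(\<Sum>a<n. \<Sum>k<n. r * ((if C1 a k then x1 else 0) + (if C2 a k then x12 else 0)
            + (if C3 a k then x13 else 0) + (if C4 a k then x23 else 0)) * X a k * Y k a)
     = (\<Sum>a<n. \<Sum>k<n. x1 * (r * (if C1 a k then X a k * Y k a else 0)) + x12 * (r * (if C2 a k then X a k * Y k a else 0))
          + x13 * (r * (if C3 a k then X a k * Y k a else 0)) + x23 * (r * (if C4 a k then X a k * Y k a else 0)))"
    by simp
  also have "\<dots> = x1 * (r * (\<Sum>a<n. \<Sum>k<n. if C1 a k then X a k * Y k a else 0))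
       + x12 * (r * (\<Sum>a<n. \<Sum>k<n. if C2 a k then X a k * Y k a else 0))
       + x13 * (r * (\<Sum>a<n. \<Sum>k<n. if C3 a k then X a k * Y k a else 0))
       + x23 * (r * (\<Sum>a<n. \<Sum>k<n. if C4 a k then X a k * Y k a else 0))"
    by (simp only: sum.distrib sum_distrib_left)
  finally show ?thesis by simp
qed

lemma metric_G: "metricIII n x1 x12 x13 x23 X Y = G n (wt n x1 x12 x13 x23) X Y"
proof -
  define C1 where "C1 = (\<lambda>a b. blk (n-2) 1 a = 1 \<and> blk (n-2) 1 b = 1)"
  define C2 where "C2 = (\<lambda>a b. (blk (n-2) 1 a = 1 \<and> blk (n-2) 1 b = 2) \<or> (blk (n-2) 1 a = 2 \<and> blk (n-2) 1 b = 1))"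
  define C3 where "C3 = (\<lambda>a b. (blk (n-2) 1 a = 1 \<and> blk (n-2) 1 b = 3) \<or> (blk (n-2) 1 a = 3 \<and> blk (n-2) 1 b = 1))"
  define C4 where "C4 = (\<lambda>a b. (blk (n-2) 1 a = 2 \<and> blk (n-2) 1 b = 3) \<or> (blk (n-2) 1 a = 3 \<and> blk (n-2) 1 b = 2))"
  have p1: "\<And>Z. proj_diag (n-2) 1 1 Z = (\<lambda>a b. if C1 a b then Z a b else 0)" by (simp add: proj_diag_def C1_def)
  have p2: "\<And>Z. proj_off (n-2) 1 1 2 Z = (\<lambda>a b. if C2 a b then Z a b else 0)" by (simp add: proj_off_def C2_def)
  have p3: "\<And>Z. proj_off (n-2) 1 1 3 Z = (\<lambda>a b. if C3 a b then Z a b else 0)" by (simp add: proj_off_def C3_def)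
  have p4: "\<And>Z. proj_off (n-2) 1 2 3 Z = (\<lambda>a b. if C4 a b then Z a b else 0)" by (simp add: proj_off_def C4_def)
  have s1: "\<And>a b. C1 a b = C1 b a" by (auto simp: C1_def)
  have s2: "\<And>a b. C2 a b = C2 b a" by (auto simp: C2_def)
  have s3: "\<And>a b. C3 a b = C3 b a" by (auto simp: C3_def)
  have s4: "\<And>a b. C4 a b = C4 b a" by (auto simp: C4_def)
  have w: "wt n x1 x12 x13 x23 = (\<lambda>a k. (real n - 2) * ((if C1 a k then x1 else 0) + (if C2 a k then x12 else 0)
            + (if C3 a k then x13 else 0) + (if C4 a k then x23 else 0)))"
    by (simp add: wt_def C1_def C2_def C3_def C4_def fun_eq_iff)
  show ?thesis
    unfolding metricIII_def Let_def killing_def p1 p2 p3 p4 tr_proj[OF s1] tr_proj[OF s2] tr_proj[OF s3] tr_proj[OF s4]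
      w G_def
    by (rule comb)
qed

lemma wt_pos: assumes "n \<ge> 5" "x1 > 0" "x12 > 0" "x13 > 0" "x23 > 0" "a < n" "b < n" "a \<noteq> b"
  shows "wt n x1 x12 x13 x23 a b > 0"
proof -
  have "((if blk (n-2) 1 a = 1 \<and> blk (n-2) 1 b = 1 then x1 else 0)
   + (if (blk (n-2) 1 a = 1 \<and> blk (n-2) 1 b = 2) \<or> (blk (n-2) 1 a = 2 \<and> blk (n-2) 1 b = 1) then x12 else 0)
   + (if (blk (n-2) 1 a = 1 \<and> blk (n-2) 1 b = 3) \<or> (blk (n-2) 1 a = 3 \<and> blk (n-2) 1 b = 1) then x13 else 0)
   + (if (blk (n-2) 1 a = 2 \<and> blk (n-2) 1 b = 3) \<or> (blk (n-2) 1 a = 3 \<and> blk (n-2) 1 b = 2) then x23 else 0)) > 0"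
    using assms unfolding blk_def by auto
  moreover have "real n - 2 > 0" using assms by simp
  ultimately show ?thesis unfolding wt_def by simp
qed

lemma wt_sym: "wt n x1 x12 x13 x23 a b = wt n x1 x12 x13 x23 b a"
proof -
  have "\<And>P Q. (P \<and> Q) = (Q \<and> P)" "\<And>P Q. (P \<or> Q) = (Q \<or> P)" by blast+
  have e: "\<And>u v w z. ((blk (n-2) 1 a = u \<and> blk (n-2) 1 b = v) \<or> (blk (n-2) 1 a = w \<and> blk (n-2) 1 b = z))
     = ((blk (n-2) 1 b = z \<and> blk (n-2) 1 a = w) \<or> (blk (n-2) 1 b = v \<and> blk (n-2) 1 a = u))" by blast
  have e1: "(blk (n-2) 1 a = 1 \<and> blk (n-2) 1 b = 1) = (blk (n-2) 1 b = 1 \<and> blk (n-2) 1 a = 1)" by blast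
  show ?thesis unfolding wt_def by (simp only: e e1)
qed

lemma phiX: assumes "n \<ge> 5" "X \<in> m_off n (n - 2) 1 1 2" shows "phi (n-2) X = sc (-1) X"
proof (intro ext)
  fix a b
  have e: "X a b = proj_off (n - 2) 1 1 2 X a b" using assms(2) by (simp add: m_off_def)
  show "phi (n-2) X a b = sc (-1) X a b"
  proof (cases "X a b = 0")
    case True then show ?thesis by (simp add: phi_def sc_def)
  next
    case False
    then have "(blk (n-2) 1 a = 1 \<and> blk (n-2) 1 b = 2) \<or> (blk (n-2) 1 a = 2 \<and> blk (n-2) 1 b = 1)"
      using e unfolding proj_off_def by (auto split: if_splits)
    then have "sg (n-2) a * sg (n-2) b = -1" unfolding blk_def sg_def using assms(1)
      by (auto split: if_splits)
    then show ?thesis by (simp add: phi_def sc_def)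
  qed
qed

lemma phiY: assumes "n \<ge> 5" "Y \<in> m_off n (n - 2) 1 1 3" shows "phi (n-2) Y = Y"
proof (intro ext)
  fix a b
  have e: "Y a b = proj_off (n - 2) 1 1 3 Y a b" using assms(2) by (simp add: m_off_def)
  show "phi (n-2) Y a b = Y a b"
  proof (cases "Y a b = 0")
    case True then show ?thesis by (simp add: phi_def)
  next
    case False
    then have "(blk (n-2) 1 a = 1 \<and> blk (n-2) 1 b = 3) \<or> (blk (n-2) 1 a = 3 \<and> blk (n-2) 1 b = 1)"
      using e unfolding proj_off_def by (auto split: if_splits)
    then have "sg (n-2) a * sg (n-2) b = 1" unfolding blk_def sg_def using assms(1)
      by (auto split: if_splits)
    then show ?thesis by (simp add: phi_def)
  qed
qed

theorem lemma7p1: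
  fixes n :: nat and x1 x12 x13 x23 :: real and X Y :: mat
  assumes "n \<ge> 5"
    and "x1 > 0" and "x12 > 0" and "x13 > 0" and "x23 > 0"
    and "X \<in> m_off n (n - 2) 1 1 2"
    and "Y \<in> m_off n (n - 2) 1 1 3"
  shows "ricci n (metricIII n x1 x12 x13 x23) X Y = 0"
proof -
  interpret L: LC n "wt n x1 x12 x13 x23"
  proof
    fix a b
    show "a < n \<Longrightarrow> b < n \<Longrightarrow> a \<noteq> b \<Longrightarrow> wt n x1 x12 x13 x23 a b > 0"
      by (rule wt_pos[OF assms(1-5)])
    show "wt n x1 x12 x13 x23 a b = wt n x1 x12 x13 x23 b a" by (rule wt_sym)
  qed
  have g: "metricIII n x1 x12 x13 x23 = G n (wt n x1 x12 x13 x23)"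
    by (intro ext) (rule metric_G)
  have "ricci n (G n (wt n x1 x12 x13 x23)) X Y = ricci n (G n (wt n x1 x12 x13 x23)) (phi (n-2) X) (phi (n-2) Y)"
    by (rule L.ricci_phi[symmetric])
  also have "\<dots> = ricci n (G n (wt n x1 x12 x13 x23)) (sc (-1) X) Y"
    by (simp only: phiX[OF assms(1,6)] phiY[OF assms(1,7)])
  also have "\<dots> = (-1) * ricci n (G n (wt n x1 x12 x13 x23)) X Y"
    by (rule L.ricci_sc)
  finally show ?thesis unfolding g by simp
qed

end
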